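(* Let $\pi,\tau\in\mathfrak{S}_m$. Then $\pi$ and $\tau$ are super-strongly c-Wilf equivalent if and only if $r^\pi_{n,S}=r^\tau_{n,S}$ for all $n$ and all sets $S$ of positive integers.
   Context: The standardization $\operatorname{st}(w)$ of a word of distinct integers replaces its smallest entry by 1, the next smallest by 2, etc. For $\pi\in\mathfrak{S}_m$ and $\sigma\in\mathfrak{S}_n$, $\operatorname{Em}(\pi,\sigma)=\{i\in[n-m+1]:\operatorname{st}(\sigma_i\cdots\sigma_{i+m-1})=\pi\}$. For a set $S$ of positive integers, $a^\pi_{n,S}$ is the number of $\sigma\in\mathfrak{S}_n$ with $\operatorname{Em}(\pi,\sigma)=S$; $\pi,\tau$ are super-strongly c-Wilf equivalent if $a^\pi_{n,S}=a^\tau_{n,S}$ for all $n,S$. The overlap set is $\mathcal{O}_\pi=\{i\in[m-1]:\operatorname{st}(\pi_{i+1}\cdots\pi_m)=\operatorname{st}(\pi_1\cdots\pi_{m-i})\}$. The refined cluster number $r^\pi_{n,S}$ is defined as follows: if $S=\{i_1<\dots<i_k\}\subseteq[n-m+1]$ satisfies $i_1=1$, $i_k=n-m+1$ and $i_{j+1}-i_j\in\mathcal{O}_\pi$ for all $j\in[k-1]$, then $r^\pi_{n,S}$ is the number of $\sigma\in\mathfrak{S}_n$ with $S\subseteq\operatorname{Em}(\pi,\sigma)$; otherwise $r^\pi_{n,S}=0$. *)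

theory Defs
  imports Main
begin

definition perms :: "nat \<Rightarrow> nat list set" where
  "perms n = {xs. distinct xs \<and> set xs = {1..n}}"

definition st :: "nat list \<Rightarrow> nat list" where
  "st w = map (\<lambda>x. card {y \<in> set w. y \<le> x}) w"

text \<open>Em(pi, sigma): starting positions i (1-based, i in [n-m+1]) of
consecutive occurrences of pi in sigma.\<close>
definition Em :: "nat list \<Rightarrow> nat list \<Rightarrow> nat set" where
  "Em p s = {i. 1 \<le> i \<and> i + length p \<le> length s + 1 \<and>
                st (take (length p) (drop (i - 1) s)) = p}"

definition a_num :: "nat list \<Rightarrow> nat \<Rightarrow> nat set \<Rightarrow> nat" where
  "a_num p n S = card {s \<in> perms n. Em p s = S}"

definition overlap :: "nat list \<Rightarrow> nat set" where
  "overlap p = {i. 1 \<le> i \<and> i \<le> length p - 1 \<and>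
                   st (drop i p) = st (take (length p - i) p)}"

definition cluster_set :: "nat list \<Rightarrow> nat \<Rightarrow> nat set \<Rightarrow> bool" where
  "cluster_set p n S \<longleftrightarrow> finite S \<and> S \<noteq> {} \<and> Min S = 1 \<and>
     Max S + length p = n + 1 \<and>
     (\<forall>i\<in>S. \<forall>j\<in>S. i < j \<and> (\<forall>l\<in>S. \<not> (i < l \<and> l < j)) \<longrightarrow> j - i \<in> overlap p)"

definition r_num :: "nat list \<Rightarrow> nat \<Rightarrow> nat set \<Rightarrow> nat" where
  "r_num p n S = (if cluster_set p n S then card {s \<in> perms n. S \<subseteq> Em p s} else 0)"

definition super_strongly_cWilf :: "nat list \<Rightarrow> nat list \<Rightarrow> bool" where
  "super_strongly_cWilf p q \<longleftrightarrow>
     (\<forall>n S. S \<subseteq> {0<..} \<longrightarrow> a_num p n S = a_num q n S)"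

end

theory Submission imports Defs "HOL-Combinatorics.Multiset_Permutations"
begin

definition rk :: "nat list \<Rightarrow> nat \<Rightarrow> nat" where
  "rk w x = card {y \<in> set w. y \<le> x}"

lemma st_rk: "st w = map (rk w) w" by (simp add: st_def rk_def)

lemma rk_mono: assumes "x \<in> set w" "x' \<in> set w" "x < x'" shows "rk w x < rk w x'"
proof -
  have "{y \<in> set w. y \<le> x} \<subseteq> {y \<in> set w. y \<le> x'}" using assms by auto
  moreover have "x' \<in> {y \<in> set w. y \<le> x'}" "x' \<notin> {y \<in> set w. y \<le> x}" using assms by auto
  ultimately have "{y \<in> set w. y \<le> x} \<subset> {y \<in> set w. y \<le> x'}" by blast
  then show ?thesis unfolding rk_def by (simp add: psubset_card_mono)
qed

lemma mono_inj:
  assumes mono: "\<And>x y. x \<in> A \<Longrightarrow> y \<in> A \<Longrightarrow> x < y \<Longrightarrow> (f x :: nat) < f y"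
  shows "inj_on f (A :: nat set)"
proof (rule inj_onI)
  fix x y assume "x \<in> A" "y \<in> A" "f x = f y"
  then show "x = y" using mono[of x y] mono[of y x] by (cases x y rule: linorder_cases) auto
qed

lemma mono_le:
  assumes mono: "\<And>x y. x \<in> A \<Longrightarrow> y \<in> A \<Longrightarrow> x < y \<Longrightarrow> (f x :: nat) < f y"
    and "x \<in> A" "y \<in> A"
  shows "f y \<le> f x \<longleftrightarrow> y \<le> (x::nat)"
proof (cases x y rule: linorder_cases)
  case less
  then have "f x < f y" using mono assms(2,3) by blast
  then show ?thesis using less by (meson leD leI)
next
  case equal
  then show ?thesis by simp
next
  case greater
  then have "f y < f x" using mono assms(2,3) by blast
  then show ?thesis using greater by (meson less_imp_le)
qed

lemma st_map_mono:
  assumes mono: "\<And>x y. x \<in> A \<Longrightarrow> y \<in> A \<Longrightarrow> x < y \<Longrightarrow> (f x :: nat) < f y"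
    and sub: "set v \<subseteq> A"
  shows "st (map f v) = st v"
proof -
  have inj: "inj_on f A" using mono by (rule mono_inj)
  have "card {y \<in> f ` set v. y \<le> f x} = card {y \<in> set v. y \<le> x}" if xv: "x \<in> set v" for x
  proof -
    have "{y \<in> f ` set v. y \<le> f x} = f ` {y \<in> set v. y \<le> x}"
    proof (rule set_eqI, rule iffI)
      fix z assume "z \<in> {y \<in> f ` set v. y \<le> f x}"
      then obtain y where y: "y \<in> set v" "z = f y" "f y \<le> f x" by auto
      then have "y \<le> x" using mono_le[where A=A and f=f and x=x and y=y, OF mono] sub xv by auto
      then show "z \<in> f ` {y \<in> set v. y \<le> x}" using y by auto
    next
      fix z assume "z \<in> f ` {y \<in> set v. y \<le> x}"
      then obtain y where y: "y \<in> set v" "z = f y" "y \<le> x" by auto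
      then have "f y \<le> f x" using mono_le[where A=A and f=f and x=x and y=y, OF mono] sub xv by auto
      then show "z \<in> {y \<in> f ` set v. y \<le> f x}" using y by auto
    qed
    moreover have "inj_on f {y \<in> set v. y \<le> x}"
      by (rule inj_on_subset[OF inj]) (use sub in auto)
    ultimately show ?thesis by (simp add: card_image)
  qed
  then show ?thesis unfolding st_def by (simp cong: map_cong)
qed

lemma st_sub:
  assumes "distinct w"
  shows "st (take a (drop b (st w))) = st (take a (drop b w))"
proof -
  have e: "take a (drop b (st w)) = map (rk w) (take a (drop b w))"
    by (simp add: st_rk take_map drop_map)
  have "set (take a (drop b w)) \<subseteq> set w"
    by (meson in_set_dropD in_set_takeD subsetI)
  then have "st (map (rk w) (take a (drop b w))) = st (take a (drop b w))"
    by (intro st_map_mono[of "set w"]) (auto intro: rk_mono)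
  then show ?thesis unfolding e .
qed

lemma st_drop: "distinct w \<Longrightarrow> st (drop b (st w)) = st (drop b w)"
  using st_sub[of w "length w" b] by (simp add: st_def)

lemma st_take: "distinct w \<Longrightarrow> st (take a (st w)) = st (take a w)"
  using st_sub[of w a 0] by simp

lemma st_perm:
  assumes "distinct w" shows "st w \<in> perms (length w)"
proof -
  have inj: "inj_on (rk w) (set w)"
    by (rule mono_inj, rule rk_mono)
  have d: "distinct (st w)" using assms inj by (simp add: st_rk distinct_map)
  have "set (st w) \<subseteq> {1..length w}"
  proof
    fix z assume "z \<in> set (st w)"
    then obtain x where x: "x \<in> set w" "z = rk w x" by (auto simp: st_rk)
    have "x \<in> {y \<in> set w. y \<le> x}" using x by simp
    then have "{y \<in> set w. y \<le> x} \<noteq> {}" by blast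
    then have "1 \<le> z" unfolding x rk_def by (simp add: Suc_le_eq card_gt_0_iff)
    moreover have "z \<le> card (set w)" unfolding x rk_def by (rule card_mono) auto
    ultimately show "z \<in> {1..length w}" using assms by (simp add: distinct_card)
  qed
  moreover have "card (set (st w)) = length w"
    using distinct_card[OF d] by (simp add: st_def)
  ultimately have "set (st w) = {1..length w}" by (simp add: card_subset_eq)
  then show ?thesis using d by (simp add: perms_def)
qed

lemma st_inj:
  assumes "distinct v" "distinct v'" "set v = set v'" "st v = st v'"
  shows "v = v'"
proof -
  have inj: "inj_on (rk v) (set v)"
    by (rule mono_inj, rule rk_mono)
  have "rk v = rk v'" using assms(3) by (simp add: rk_def fun_eq_iff)
  then have "map (rk v) v = map (rk v) v'" using assms(4) by (simp add: st_rk)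
  moreover have "inj_on (rk v) (set v \<union> set v')" using inj assms(3) by simp
  ultimately show ?thesis using inj_on_map_eq_map[of "rk v" v v'] by simp
qed


lemma em_overlap:
  assumes "distinct s" "i \<in> Em p s" "j \<in> Em p s" "i < j" "j - i < length p"
  shows "j - i \<in> overlap p"
proof -
  define m where "m = length p"
  define d where "d = j - i"
  define w where "w = take m (drop (i - 1) s)"
  define w' where "w' = take m (drop (j - 1) s)"
  have i1: "1 \<le> i" and pw: "st w = p" using assms(2) by (auto simp: Em_def w_def m_def)
  have pw': "st w' = p" using assms(3) by (auto simp: Em_def w'_def m_def)
  have dw: "distinct w" "distinct w'" using assms(1) by (auto simp: w_def w'_def)
  have e1: "drop d w = take (m - d) (drop (j - 1) s)"
    using i1 assms(4) by (simp add: w_def d_def drop_take add.commute)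
  have e2: "take (m - d) w' = take (m - d) (drop (j - 1) s)"
    by (simp add: w'_def)
  have "st (drop d p) = st (drop d w)" using st_drop[OF dw(1)] pw by simp
  also have "\<dots> = st (take (m - d) w')" using e1 e2 by simp
  also have "\<dots> = st (take (m - d) p)" using st_take[OF dw(2)] pw' by simp
  finally have "st (drop d p) = st (take (length p - d) p)" by (simp add: m_def)
  moreover have "1 \<le> d" "d \<le> length p - 1" using assms(4,5) by (auto simp: d_def)
  ultimately show ?thesis by (simp add: overlap_def d_def)
qed

definition Phi :: "nat \<Rightarrow> nat list \<Rightarrow> nat set \<times> nat list \<times> nat list" where
  "Phi k s = (set (take k s), st (take k s), st (drop k s))"

lemma perms_alt: "perms n = permutations_of_set {1..n}"
  by (auto simp: perms_def permutations_of_set_def)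

lemma perms_length: "s \<in> perms n \<Longrightarrow> length s = n"
  by (auto simp: perms_def dest: distinct_card)

lemma Phi_bij:
  assumes "k \<le> n"
  shows "bij_betw (Phi k) (perms n) ({A. A \<subseteq> {1..n} \<and> card A = k} \<times> perms k \<times> perms (n - k))"
proof -
  let ?C = "{A. A \<subseteq> {1..n} \<and> card A = k} \<times> perms k \<times> perms (n - k)"
  have into: "Phi k s \<in> ?C" if s: "s \<in> perms n" for s
  proof -
    have ls: "length s = n" using perms_length[OF s] .
    have ds: "distinct s" using s by (simp add: perms_def)
    have "st (take k s) \<in> perms k" using st_perm[of "take k s"] ds ls assms by simp
    moreover have "st (drop k s) \<in> perms (n - k)" using st_perm[of "drop k s"] ds ls by simp
    moreover have "set (take k s) \<subseteq> {1..n}" using s by (auto simp: perms_def dest: in_set_takeD)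
    moreover have "card (set (take k s)) = k" using ds ls assms by (simp add: distinct_card)
    ultimately show ?thesis by (simp add: Phi_def)
  qed
  have inj: "inj_on (Phi k) (perms n)"
  proof (rule inj_onI)
    fix s s' assume s: "s \<in> perms n" and s': "s' \<in> perms n" and eq: "Phi k s = Phi k s'"
    have ds: "distinct s" "distinct s'" using s s' by (auto simp: perms_def)
    have e: "set (take k s) = set (take k s')" "st (take k s) = st (take k s')"
      "st (drop k s) = st (drop k s')" using eq by (simp_all add: Phi_def)
    have t: "take k s = take k s'" by (rule st_inj) (use ds e in simp_all)
    have setd: "set (drop k x) = {1..n} - set (take k x)" if "x \<in> perms n" for x
    proof -
      have "distinct (take k x @ drop k x)" using that by (simp add: perms_def)
      then have "set (take k x) \<inter> set (drop k x) = {}" unfolding distinct_append by blast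
      moreover have "set (take k x) \<union> set (drop k x) = set (take k x @ drop k x)"
        by (simp only: set_append)
      then have "set (take k x) \<union> set (drop k x) = {1..n}" using that by (simp add: perms_def)
      ultimately show ?thesis by auto
    qed
    have dd: "drop k s = drop k s'"
      by (rule st_inj) (use ds e setd[OF s] setd[OF s'] t in simp_all)
    have "take k s @ drop k s = take k s' @ drop k s'" using t dd by simp
    then show "s = s'" by simp
  qed
  have fin: "finite ?C" by (simp add: perms_alt)
  have "card ?C = (n choose k) * (fact k * fact (n - k))"
    by (simp add: card_cartesian_product perms_alt n_subsets)
  also have "\<dots> = fact n" using binomial_fact_lemma[OF assms] by (simp add: ac_simps)
  finally have cC: "card ?C = fact n" .
  have sub: "Phi k ` perms n \<subseteq> ?C" using into by blast
  have "card (Phi k ` perms n) = fact n" using inj by (simp add: card_image perms_alt)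
  then have "Phi k ` perms n = ?C" using card_subset_eq[OF fin sub] cC by simp
  then show ?thesis using inj by (simp add: bij_betw_def)
qed

lemma split_count:
  assumes "k \<le> n"
  shows "card {s \<in> perms n. PL (st (take k s)) \<and> PR (st (drop k s))} =
    card {A. A \<subseteq> {1..n} \<and> card A = k} * card {t \<in> perms k. PL t} * card {u \<in> perms (n - k). PR u}"
proof -
  let ?C = "{A. A \<subseteq> {1..n} \<and> card A = k} \<times> perms k \<times> perms (n - k)"
  let ?X = "{A. A \<subseteq> {1..n} \<and> card A = k} \<times> {t \<in> perms k. PL t} \<times> {u \<in> perms (n - k). PR u}"
  let ?S = "{s \<in> perms n. PL (st (take k s)) \<and> PR (st (drop k s))}"
  have b: "bij_betw (Phi k) (perms n) ?C" using Phi_bij[OF assms] .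
  have inj: "inj_on (Phi k) ?S" using b by (auto simp: bij_betw_def intro: inj_on_subset)
  have "Phi k ` ?S = ?X"
  proof
    show "Phi k ` ?S \<subseteq> ?X"
    proof
      fix x assume "x \<in> Phi k ` ?S"
      then obtain s where s: "s \<in> perms n" "PL (st (take k s))" "PR (st (drop k s))" "x = Phi k s"
        by blast
      have "Phi k s \<in> ?C" using b s(1) by (meson bij_betwE)
      then show "x \<in> ?X" using s by (simp add: Phi_def)
    qed
  next
    show "?X \<subseteq> Phi k ` ?S"
    proof
      fix x assume x: "x \<in> ?X"
      then have "x \<in> ?C" by auto
      then have "x \<in> Phi k ` perms n" using b by (simp add: bij_betw_def)
      then obtain s where s: "s \<in> perms n" "x = Phi k s" by blast
      then have "s \<in> ?S" using x by (auto simp: Phi_def)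
      then show "x \<in> Phi k ` ?S" using s by blast
    qed
  qed
  then have "card ?S = card ?X" using card_image[OF inj] by simp
  then show ?thesis by (simp add: card_cartesian_product)
qed


definition Bc :: "nat list \<Rightarrow> nat \<Rightarrow> nat set \<Rightarrow> nat" where
  "Bc p n S = card {s \<in> perms n. S \<subseteq> Em p s}"

lemma Em_take:
  assumes s: "s \<in> perms n" and kn: "k \<le> n" and i1: "1 \<le> i" and ik: "i + length p \<le> k + 1"
  shows "i \<in> Em p (st (take k s)) \<longleftrightarrow> i \<in> Em p s"
proof -
  have ls: "length s = n" using perms_length[OF s] .
  have ds: "distinct (take k s)" using s by (simp add: perms_def)
  have l: "length (st (take k s)) = k" using ls kn by (simp add: st_def)
  have e: "take (length p) (drop (i - 1) (take k s)) = take (length p) (drop (i - 1) s)"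
  proof -
    have h: "length p \<le> k - (i - 1)" using ik i1 by arith
    have "drop (i - 1) (take k s) = take (k - (i - 1)) (drop (i - 1) s)" by (rule drop_take)
    then show ?thesis using h by (simp add: min_absorb1)
  qed
  have "st (take (length p) (drop (i - 1) (st (take k s)))) = st (take (length p) (drop (i - 1) s))"
    using st_sub[OF ds, of "length p" "i - 1"] e by simp
  then show ?thesis using l ls ik i1 kn by (simp add: Em_def)
qed

lemma Em_drop:
  assumes s: "s \<in> perms n" and kn: "k \<le> n" and ki: "k < i"
  shows "i - k \<in> Em p (st (drop k s)) \<longleftrightarrow> i \<in> Em p s"
proof -
  have ls: "length s = n" using perms_length[OF s] .
  have ds: "distinct (drop k s)" using s by (simp add: perms_def)
  have l: "length (st (drop k s)) = n - k" using ls by (simp add: st_def)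
  have e: "drop (i - k - 1) (drop k s) = drop (i - 1) s"
    using ki by (simp add: drop_drop)
  have "st (take (length p) (drop (i - k - 1) (st (drop k s)))) = st (take (length p) (drop (i - 1) s))"
    using st_sub[OF ds, of "length p" "i - k - 1"] e by simp
  then show ?thesis using l ls ki kn by (auto simp: Em_def)
qed

lemma split_B:
  assumes kn: "k \<le> n" and S0: "S \<subseteq> {0<..}" and sep: "\<forall>i\<in>S. i + length p \<le> k + 1 \<or> k < i"
  shows "Bc p n S = card {A. A \<subseteq> {1..n} \<and> card A = k} * Bc p k {i\<in>S. i + length p \<le> k + 1}
           * Bc p (n - k) ((\<lambda>i. i - k) ` {i\<in>S. k < i})"
proof -
  let ?SL = "{i\<in>S. i + length p \<le> k + 1}"
  let ?SR = "(\<lambda>i. i - k) ` {i\<in>S. k < i}"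
  have eq: "S \<subseteq> Em p s \<longleftrightarrow> ?SL \<subseteq> Em p (st (take k s)) \<and> ?SR \<subseteq> Em p (st (drop k s))"
    if s: "s \<in> perms n" for s
  proof
    assume H: "S \<subseteq> Em p s"
    have "?SL \<subseteq> Em p (st (take k s))"
    proof
      fix i assume "i \<in> ?SL"
      then have "i \<in> S" "1 \<le> i" "i + length p \<le> k + 1" using S0 by auto
      then show "i \<in> Em p (st (take k s))" using Em_take[OF s kn] H by blast
    qed
    moreover have "?SR \<subseteq> Em p (st (drop k s))"
    proof
      fix x assume "x \<in> ?SR"
      then obtain i where "i \<in> S" "k < i" "x = i - k" by blast
      then show "x \<in> Em p (st (drop k s))" using Em_drop[OF s kn] H by blast
    qed
    ultimately show "?SL \<subseteq> Em p (st (take k s)) \<and> ?SR \<subseteq> Em p (st (drop k s))" ..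
  next
    assume H: "?SL \<subseteq> Em p (st (take k s)) \<and> ?SR \<subseteq> Em p (st (drop k s))"
    show "S \<subseteq> Em p s"
    proof
      fix i assume iS: "i \<in> S"
      then have i1: "1 \<le> i" using S0 by auto
      show "i \<in> Em p s"
      proof (cases "i + length p \<le> k + 1")
        case True
        then have "i \<in> Em p (st (take k s))" using H iS by blast
        then show ?thesis using Em_take[OF s kn i1 True] by simp
      next
        case False
        then have ki: "k < i" using sep iS by auto
        then have "i - k \<in> Em p (st (drop k s))" using H iS by blast
        then show ?thesis using Em_drop[OF s kn ki] by simp
      qed
    qed
  qed
  have "{s \<in> perms n. S \<subseteq> Em p s} =
    {s \<in> perms n. (\<lambda>t. ?SL \<subseteq> Em p t) (st (take k s)) \<and> (\<lambda>u. ?SR \<subseteq> Em p u) (st (drop k s))}"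
    by (rule Collect_cong) (use eq in blast)
  then show ?thesis unfolding Bc_def using split_count[OF kn, of "\<lambda>t. ?SL \<subseteq> Em p t" "\<lambda>u. ?SR \<subseteq> Em p u"]
    by simp
qed

lemma B_zero_out:
  assumes "i \<in> S" "n + 1 < i + length p"
  shows "Bc p n S = 0"
proof -
  have "{s \<in> perms n. S \<subseteq> Em p s} = {}"
    using assms by (auto simp: Em_def perms_length)
  then show ?thesis unfolding Bc_def by (simp only: card.empty)
qed

lemma B_zero_gap:
  assumes "i \<in> S" "j \<in> S" "i < j" "j - i < length p" "j - i \<notin> overlap p"
  shows "Bc p n S = 0"
proof -
  have "{s \<in> perms n. S \<subseteq> Em p s} = {}"
  proof (rule ccontr)
    assume "{s \<in> perms n. S \<subseteq> Em p s} \<noteq> {}"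
    then obtain s where s: "s \<in> perms n" "S \<subseteq> Em p s" by blast
    then have "distinct s" by (simp add: perms_def)
    then have "j - i \<in> overlap p" using em_overlap[of s i p j] s assms by blast
    then show False using assms by simp
  qed
  then show ?thesis unfolding Bc_def by (simp only: card.empty)
qed

lemma noSplit_r:
  assumes m1: "1 \<le> length p" and S0: "S \<subseteq> {0<..}" and ne: "S \<noteq> {}"
    and inr: "\<forall>i\<in>S. i + length p \<le> n + 1"
    and ns: "\<not> (\<exists>k. 0 < k \<and> k < n \<and> (\<forall>i\<in>S. i + length p \<le> k + 1 \<or> k < i))"
  shows "Bc p n S = r_num p n S"
proof -
  let ?m = "length p"
  have "S \<subseteq> {1..n}" using S0 inr m1 by force
  then have fin: "finite S" by (rule finite_subset) simp
  have MinS: "Min S \<in> S" "\<And>i. i \<in> S \<Longrightarrow> Min S \<le> i" using fin ne by auto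
  have MaxS: "Max S \<in> S" "\<And>i. i \<in> S \<Longrightarrow> i \<le> Max S" using fin ne by auto
  have Min1: "Min S = 1"
  proof (rule ccontr)
    assume "Min S \<noteq> 1"
    moreover have "Min S \<ge> 1" using MinS S0 by force
    ultimately have "0 < Min S - 1" by simp
    moreover have "Min S + ?m \<le> n + 1" using inr MinS(1) by blast
    then have "Min S - 1 < n" using m1 \<open>Min S \<ge> 1\<close> by simp
    moreover have "\<forall>i\<in>S. i + ?m \<le> (Min S - 1) + 1 \<or> Min S - 1 < i"
      using MinS \<open>Min S \<ge> 1\<close> by force
    ultimately show False using ns by blast
  qed
  have Max1: "Max S + ?m = n + 1"
  proof (rule ccontr)
    assume H: "Max S + ?m \<noteq> n + 1"
    have "Max S + ?m \<le> n + 1" using inr MaxS by blast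
    then have lt: "Max S + ?m < n + 1" using H by simp
    have "Max S \<ge> 1" using MaxS S0 by force
    then have "0 < Max S + ?m - 1" using m1 by simp
    moreover have "Max S + ?m - 1 < n" using lt m1 by simp
    moreover have "\<forall>i\<in>S. i + ?m \<le> (Max S + ?m - 1) + 1 \<or> Max S + ?m - 1 < i"
      using MaxS m1 by force
    ultimately show False using ns by blast
  qed
  have gap: "j - i < ?m" if ij: "i \<in> S" "j \<in> S" "i < j" "\<forall>l\<in>S. \<not> (i < l \<and> l < j)" for i j
  proof (rule ccontr)
    assume "\<not> j - i < ?m"
    then have jm: "i + ?m \<le> j" using ij(3) by arith
    have i1: "1 \<le> i" using ij S0 by force
    have "j + ?m \<le> n + 1" using inr ij by blast
    then have "i + ?m - 1 < n" using jm m1 by simp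
    moreover have "0 < i + ?m - 1" using i1 m1 by simp
    moreover have "\<forall>l\<in>S. l + ?m \<le> (i + ?m - 1) + 1 \<or> i + ?m - 1 < l"
    proof
      fix l assume lS: "l \<in> S"
      have "l \<le> i \<or> j \<le> l" using ij(4) lS by force
      then show "l + ?m \<le> (i + ?m - 1) + 1 \<or> i + ?m - 1 < l" using jm m1 by force
    qed
    ultimately show False using ns by blast
  qed
  show ?thesis
  proof (cases "cluster_set p n S")
    case True
    then show ?thesis by (simp add: r_num_def Bc_def)
  next
    case False
    then obtain i j where ij: "i \<in> S" "j \<in> S" "i < j" "\<forall>l\<in>S. \<not> (i < l \<and> l < j)"
      "j - i \<notin> overlap p"
      using fin ne Min1 Max1 unfolding cluster_set_def by blast
    have "Bc p n S = 0" using B_zero_gap[OF ij(1,2,3) gap[OF ij(1-4)] ij(5)] .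
    then show ?thesis using False by (simp add: r_num_def)
  qed
qed

lemma B_eq:
  assumes len: "length q = length p" and m1: "1 \<le> length p"
    and r: "\<forall>n S. S \<subseteq> {0<..} \<longrightarrow> r_num p n S = r_num q n S"
  shows "S \<subseteq> {0<..} \<Longrightarrow> Bc p n S = Bc q n S"
proof (induction n arbitrary: S rule: less_induct)
  case (less n S)
  show ?case
  proof (cases "\<exists>k. 0 < k \<and> k < n \<and> (\<forall>i\<in>S. i + length p \<le> k + 1 \<or> k < i)")
    case True
    then obtain k where k: "0 < k" "k < n" "\<forall>i\<in>S. i + length p \<le> k + 1 \<or> k < i" by blast
    let ?SL = "{i\<in>S. i + length p \<le> k + 1}"
    let ?SR = "(\<lambda>i. i - k) ` {i\<in>S. k < i}"
    let ?C = "card {A. A \<subseteq> {1..n} \<and> card A = k}"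
    have SL: "?SL \<subseteq> {0<..}" using less.prems by auto
    have SR: "?SR \<subseteq> {0<..}" by auto
    have p: "Bc p n S = ?C * Bc p k ?SL * Bc p (n - k) ?SR"
      using split_B[of k n S p] k less.prems by simp
    have q: "Bc q n S = ?C * Bc q k ?SL * Bc q (n - k) ?SR"
      using split_B[of k n S q] k less.prems len by simp
    have "Bc p k ?SL = Bc q k ?SL" using less.IH[OF k(2) SL] .
    moreover have "Bc p (n - k) ?SR = Bc q (n - k) ?SR" using less.IH[OF _ SR] k by simp
    ultimately show ?thesis using p q by simp
  next
    case False
    show ?thesis
    proof (cases "S = {}")
      case True
      then show ?thesis by (simp add: Bc_def)
    next
      case ne: False
      show ?thesis
      proof (cases "\<forall>i\<in>S. i + length p \<le> n + 1")
        case True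
        have "Bc p n S = r_num p n S" by (rule noSplit_r) (use m1 less.prems ne True False in auto)
        moreover have "Bc q n S = r_num q n S"
          by (rule noSplit_r) (use m1 less.prems ne True False len in auto)
        ultimately show ?thesis using r less.prems by simp
      next
        case False
        then obtain i where "i \<in> S" "n + 1 < i + length p" by force
        then show ?thesis using B_zero_out[of i S n p] B_zero_out[of i S n q] len by simp
      qed
    qed
  qed
qed

lemma Em_sub: "s \<in> perms n \<Longrightarrow> 1 \<le> length p \<Longrightarrow> Em p s \<subseteq> {1..n}"
  by (auto simp: Em_def perms_length)

lemma B_sum:
  assumes m1: "1 \<le> length p"
  shows "Bc p n S = (\<Sum>T\<in>{T. S \<subseteq> T \<and> T \<subseteq> {1..n}}. a_num p n T)"
proof -
  let ?W = "{T. S \<subseteq> T \<and> T \<subseteq> {1..n}}"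
  have "{s \<in> perms n. S \<subseteq> Em p s} = (\<Union>T\<in>?W. {s \<in> perms n. Em p s = T})"
    using Em_sub[OF _ m1] by blast
  moreover have "finite ?W" by (rule finite_subset[of _ "Pow {1..n}"]) auto
  moreover have "finite (perms n)" by (simp add: perms_alt)
  moreover have "card (\<Union>T\<in>?W. {s \<in> perms n. Em p s = T}) = (\<Sum>T\<in>?W. card {s \<in> perms n. Em p s = T})"
    by (rule card_UN_disjoint) (use \<open>finite ?W\<close> \<open>finite (perms n)\<close> in auto)
  ultimately have "card {s \<in> perms n. S \<subseteq> Em p s} = (\<Sum>T\<in>?W. card {s \<in> perms n. Em p s = T})"
    by simp
  then show ?thesis by (simp add: Bc_def a_num_def)
qed

lemma a_zero: "\<not> S \<subseteq> {1..n} \<Longrightarrow> 1 \<le> length p \<Longrightarrow> a_num p n S = 0"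
proof -
  assume "\<not> S \<subseteq> {1..n}" "1 \<le> length p"
  then have "{s \<in> perms n. Em p s = S} = {}" using Em_sub by blast
  then show ?thesis unfolding a_num_def by (simp only: card.empty)
qed

lemma a_from_B:
  assumes m1: "1 \<le> length p" and m2: "1 \<le> length q"
    and B: "\<And>S. S \<subseteq> {1..n} \<Longrightarrow> Bc p n S = Bc q n S"
  shows "a_num p n S = a_num q n S"
proof (cases "S \<subseteq> {1..n}")
  case False
  then show ?thesis using a_zero m1 m2 by simp
next
  case True
  have "S \<subseteq> {1..n} \<longrightarrow> a_num p n S = a_num q n S"
  proof (induction S rule: measure_induct_rule[where f="\<lambda>S. card ({1..n} - S)"])
    case (less S)
    show ?case
    proof
      assume Sn: "S \<subseteq> {1..n}"
      let ?W = "{T. S \<subseteq> T \<and> T \<subseteq> {1..n}}"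
      have finW: "finite ?W" by (rule finite_subset[of _ "Pow {1..n}"]) auto
      have SW: "S \<in> ?W" using Sn by simp
      have sp: "Bc p n S = a_num p n S + (\<Sum>T\<in>?W - {S}. a_num p n T)"
        using B_sum[OF m1, of n S] sum.remove[OF finW SW, of "a_num p n"] by simp
      have sq: "Bc q n S = a_num q n S + (\<Sum>T\<in>?W - {S}. a_num q n T)"
        using B_sum[OF m2, of n S] sum.remove[OF finW SW, of "a_num q n"] by simp
      have "(\<Sum>T\<in>?W - {S}. a_num p n T) = (\<Sum>T\<in>?W - {S}. a_num q n T)"
      proof (rule sum.cong)
        fix T assume T: "T \<in> ?W - {S}"
        then have "{1..n} - T \<subset> {1..n} - S" using Sn by auto
        then have "card ({1..n} - T) < card ({1..n} - S)"
          by (meson finite_Diff finite_atLeastAtMost psubset_card_mono)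
        then show "a_num p n T = a_num q n T" using less T by blast
      qed simp
      then show "a_num p n S = a_num q n S" using sp sq B[OF Sn] by simp
    qed
  qed
  then show ?thesis using True by blast
qed

lemma mixed_zero:
  assumes "cluster_set p n S" "\<not> cluster_set q n S" "length q = length p"
  shows "Bc q n S = 0"
proof -
  from assms obtain i j where ij: "i \<in> S" "j \<in> S" "i < j" "\<forall>l\<in>S. \<not> (i < l \<and> l < j)"
      "j - i \<notin> overlap q" "j - i \<in> overlap p"
    unfolding cluster_set_def by auto
  then have "j - i < length q" using assms(3) by (auto simp: overlap_def)
  then show ?thesis using B_zero_gap[OF ij(1,2,3) _ ij(5)] by simp
qed

theorem proposition5p1:
  fixes p q :: "nat list" and m :: nat
  assumes "p \<in> perms m" and "q \<in> perms m"
  shows "super_strongly_cWilf p q \<longleftrightarrow>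
         (\<forall>n S. S \<subseteq> {0<..} \<longrightarrow> r_num p n S = r_num q n S)"
proof -
  have lp: "length p = m" using perms_length[OF assms(1)] .
  have lq: "length q = m" using perms_length[OF assms(2)] .
  show ?thesis
  proof (cases "m = 0")
    case True
    then have "p = q" using lp lq by simp
    then show ?thesis by (simp add: super_strongly_cWilf_def)
  next
    case False
    then have m1: "1 \<le> length p" "1 \<le> length q" using lp lq by auto
    have len: "length q = length p" using lp lq by simp
    show ?thesis
    proof
      assume sw: "super_strongly_cWilf p q"
      have Beq: "Bc p n S = Bc q n S" for n S
      proof -
        have "(\<Sum>T\<in>{T. S \<subseteq> T \<and> T \<subseteq> {1..n}}. a_num p n T) =
              (\<Sum>T\<in>{T. S \<subseteq> T \<and> T \<subseteq> {1..n}}. a_num q n T)"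
        proof (rule sum.cong)
          fix T assume "T \<in> {T. S \<subseteq> T \<and> T \<subseteq> {1..n}}"
          then have "T \<subseteq> {0<..}" by auto
          then show "a_num p n T = a_num q n T" using sw by (simp add: super_strongly_cWilf_def)
        qed simp
        then show ?thesis using B_sum[OF m1(1)] B_sum[OF m1(2)] by simp
      qed
      show "\<forall>n S. S \<subseteq> {0<..} \<longrightarrow> r_num p n S = r_num q n S"
      proof (intro allI impI)
        fix n :: nat and S :: "nat set" assume "S \<subseteq> {0<..}"
        show "r_num p n S = r_num q n S"
        proof (cases "cluster_set p n S"; cases "cluster_set q n S")
          assume "cluster_set p n S" "cluster_set q n S"
          then show ?thesis using Beq by (simp add: r_num_def Bc_def[symmetric])
        next
          assume a: "cluster_set p n S" "\<not> cluster_set q n S"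
          then have "Bc q n S = 0" using mixed_zero len by blast
          then show ?thesis using a Beq[of n S] by (simp add: r_num_def Bc_def[symmetric])
        next
          assume a: "\<not> cluster_set p n S" "cluster_set q n S"
          then have "Bc p n S = 0" using mixed_zero len by (metis)
          then show ?thesis using a Beq[of n S] by (simp add: r_num_def Bc_def[symmetric])
        next
          assume a: "\<not> cluster_set p n S" "\<not> cluster_set q n S"
          then show ?thesis by (simp add: r_num_def)
        qed
      qed
    next
      assume r: "\<forall>n S. S \<subseteq> {0<..} \<longrightarrow> r_num p n S = r_num q n S"
      have Beq: "Bc p n S = Bc q n S" if "S \<subseteq> {1..n}" for n S
      proof -
        have "S \<subseteq> {0<..}" using that by auto
        then show ?thesis using B_eq[OF len m1(1) r] by blast
      qed
      show "super_strongly_cWilf p q"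
        unfolding super_strongly_cWilf_def
        using a_from_B[OF m1 Beq] by blast
    qed
  qed
qed

end
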